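(* Let $B:W_\mathbb{C}\times W_\mathbb{C}\to\mathbb{R}$ be an element of $\mathsf{BIL}$. Then the $2$-cocycle $\Gamma_\ell\times\Gamma_\ell\to\mathcal{O}_\epsilon$, $([h,t],[h',t'])\mapsto B(t,t')$ (constant functions), represents the zero class in $\mathrm{H}^2(\Gamma_\ell,\mathcal{O}_\epsilon)$. That is, the image of $\mathsf{BIL}$ in $\mathrm{H}^2(\Gamma_\ell,\mathcal{O}_\epsilon)$ vanishes.
   Context: Let $\mathbf{k}=\mathbb{Q}(\sqrt d)$ be imaginary quadratic of discriminant $d<0$ inside $\mathbb{C}$, $\delta=\sqrt d$ (principal branch). Let $V$ be a hermitian $\mathbf{k}$-space of signature $(1,n+1)$, $n\ge1$, with form $\langle\cdot,\cdot\rangle$ linear in the left argument, $V_\mathbb{C}=V\otimes\mathbb{C}$; $L$ an even integral full-rank $\mathcal{O}_\mathbf{k}$-lattice with dual $L'$ (w.r.t. the inverse different); $\Gamma$ a finite-index subgroup of the subgroup of $\mathrm{SU}(L)$ acting trivially on $L'/L$. Fix primitive isotropic $\ell\in L$, $\ell'\in L'$ with $\langle\ell,\ell'\rangle\ne0$; $D=L\cap\ell^\perp\cap\ell'^\perp$, $W=D\otimes\mathbf{k}$, $W_\mathbb{C}=W\otimes\mathbb{C}$. Siegel domain $\mathcal{H}=\{(\tau,\sigma)\in\mathbb{C}\times W_\mathbb{C}:2\operatorname{Im}(\tau)|\delta||\langle\ell,\ell'\rangle|^2>-\langle\sigma,\sigma\rangle\}$. The Heisenberg group consists of pairs $[h,t]$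 ($h\in\mathbb{Q}$, $t\in W$) with law $[h,t]\circ[h',t']=[h+h'+|\delta|^{-1}\operatorname{Im}\langle t',t\rangle,t+t']$, acting on $\mathcal{H}$ by $[h,0]:(\tau,\sigma)\mapsto(\tau+h,\sigma)$, $[0,t]:(\tau,\sigma)\mapsto(\tau+\frac{\langle\sigma,t\rangle}{\delta\langle\ell',\ell\rangle}+\frac{\langle t,t\rangle}{2\delta},\sigma+\langle\ell',\ell\rangle t)$. $\Gamma_\ell=\Gamma\cap$ Heisenberg group, assumed to equal $\{[h,t]:h\in N\mathbb{Z},t\in D_{\ell,\Gamma}\}$ for some $N\in\mathbb{Q}_{>0}$ and finite-index sublattice $D_{\ell,\Gamma}\subseteq D$. For $\epsilon>0$, $U_\epsilon(\ell)=\{[z]\in\mathbb{P}V_\mathbb{C}:\langle z,z\rangle>0,\ \langle z,z\rangle|\langle\ell',\ell\rangle|^2/|\langle z,\ell\rangle|^2>1/\epsilon\}$, identified with a $\Gamma_\ell$-stable subset of $\mathcal{H}$ via $z(\tau,\sigma)=\ell'-\delta\tau\langle\ell',\ell\rangle\ell+\sigma$. $\mathcal{O}_\epsilon$ is the ring of holomorphic functions on $U_\epsilon(\ell)$ with the $\Gamma_\ell$-action induced from the action on $U_\epsilon(\ell)$; group cohomology is computed with the standard inhomogeneous complex. $\mathsf{BIL}$ is the real vector space of real bilinear forms on $W_\mathbb{C}$ spanned by forms $\operatorname{Im}H$ with $H$ a hermitian form on $W_\mathbb{C}$ and forms $\operatorname{Im}G$ with $G$ a symmetric complex bilinear form on $W_\mathbb{C}$.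 *)

theory Defs
  imports "HOL-Analysis.Analysis" "HOL-Computational_Algebra.Squarefree"
begin

definition imag_quad_disc :: "int \<Rightarrow> bool" where
  "imag_quad_disc d \<longleftrightarrow> d < 0 \<and>
     ((d mod 4 = 1 \<and> squarefree d) \<or>
      (d mod 4 = 0 \<and> squarefree (d div 4) \<and> (d div 4) mod 4 \<in> {2, 3}))"

definition qdelta :: "int \<Rightarrow> complex" where
  "qdelta d = csqrt (of_int d)"

definition kfield :: "int \<Rightarrow> complex set" where
  "kfield d = {of_rat a + of_rat b * qdelta d | a b. True}"

definition Ok :: "int \<Rightarrow> complex set" where
  "Ok d = {of_int a + of_int b * ((of_int d + qdelta d) / 2) | a b. True}"

definition inv_diff :: "int \<Rightarrow> complex set" where
  "inv_diff d = {a / qdelta d | a. a \<in> Ok d}"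

text \<open>V_C = complex^'m; V = the k-rational points (for the standard basis);
  the hermitian form is given by a Gram matrix A, linear in the left argument.\<close>
definition hform :: "complex^'m^'m \<Rightarrow> complex^'m \<Rightarrow> complex^'m \<Rightarrow> complex" where
  "hform A x y = (\<Sum>i\<in>UNIV. \<Sum>j\<in>UNIV. x$i * A$i$j * cnj (y$j))"

definition kpoints :: "int \<Rightarrow> (complex^'m) set" where
  "kpoints d = {v. \<forall>i. v$i \<in> kfield d}"

definition hermitian_k_form :: "int \<Rightarrow> complex^'m^'m \<Rightarrow> bool" where
  "hermitian_k_form d A \<longleftrightarrow> (\<forall>i j. A$i$j \<in> kfield d \<and> A$j$i = cnj (A$i$j))"

definition herm_signature :: "complex^'m^'m \<Rightarrow> nat \<Rightarrow> nat \<Rightarrow> bool" where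
  "herm_signature A p q \<longleftrightarrow> CARD('m) = p + q \<and>
     (\<exists>b :: 'm \<Rightarrow> complex^'m.
        (\<forall>i j. i \<noteq> j \<longrightarrow> hform A (b i) (b j) = 0) \<and>
        (\<forall>i. hform A (b i) (b i) = 1 \<or> hform A (b i) (b i) = -1) \<and>
        card {i. hform A (b i) (b i) = 1} = p \<and>
        card {i. hform A (b i) (b i) = -1} = q)"

definition Ok_span :: "int \<Rightarrow> (complex^'m) set \<Rightarrow> (complex^'m) set" where
  "Ok_span d S = {v. \<exists>F c. finite F \<and> F \<subseteq> S \<and> (\<forall>x\<in>F. c x \<in> Ok d) \<and>
                        v = (\<Sum>x\<in>F. c x *s x)}"

definition full_Ok_lattice :: "int \<Rightarrow> (complex^'m) set \<Rightarrow> bool" where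
  "full_Ok_lattice d L \<longleftrightarrow> L \<subseteq> kpoints d \<and>
     (\<exists>S. finite S \<and> L = Ok_span d S) \<and>
     (\<forall>v\<in>kpoints d. \<exists>a::int. a \<noteq> 0 \<and> of_int a *s v \<in> L)"

definition dual_lattice :: "int \<Rightarrow> complex^'m^'m \<Rightarrow> (complex^'m) set \<Rightarrow> (complex^'m) set" where
  "dual_lattice d A L = {x \<in> kpoints d. \<forall>y\<in>L. hform A x y \<in> inv_diff d}"

definition even_integral :: "int \<Rightarrow> complex^'m^'m \<Rightarrow> (complex^'m) set \<Rightarrow> bool" where
  "even_integral d A L \<longleftrightarrow> L \<subseteq> dual_lattice d A L \<and>
     (\<forall>x\<in>L. hform A x x \<in> \<int>)"

definition primitive_in :: "int \<Rightarrow> (complex^'m) set \<Rightarrow> complex^'m \<Rightarrow> bool" where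
  "primitive_in d M v \<longleftrightarrow> v \<in> M \<and> v \<noteq> 0 \<and>
     (\<forall>a\<in>kfield d. a *s v \<in> M \<longrightarrow> a \<in> Ok d)"

definition WC :: "complex^'m^'m \<Rightarrow> complex^'m \<Rightarrow> complex^'m \<Rightarrow> (complex^'m) set" where
  "WC A l l' = {s. hform A s l = 0 \<and> hform A s l' = 0}"

text \<open>Elements [h,t] are pairs (h,t).\<close>
definition heis_mult :: "int \<Rightarrow> complex^'m^'m \<Rightarrow> real \<times> (complex^'m) \<Rightarrow> real \<times> (complex^'m) \<Rightarrow> real \<times> (complex^'m)" where
  "heis_mult d A g g' = (case g of (h, t) \<Rightarrow> case g' of (h', t') \<Rightarrow>
      (h + h' + Im (hform A t' t) / cmod (qdelta d), t + t'))"

definition heis_inv :: "real \<times> (complex^'m) \<Rightarrow> real \<times> (complex^'m)" where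
  "heis_inv g = (case g of (h, t) \<Rightarrow> (- h, - t))"

text \<open>Action of [h,t] = [h,0] o [0,t] on the Siegel domain; c = <l',l>.\<close>
definition heis_act :: "int \<Rightarrow> complex^'m^'m \<Rightarrow> complex \<Rightarrow> real \<times> (complex^'m)
      \<Rightarrow> complex \<times> (complex^'m) \<Rightarrow> complex \<times> (complex^'m)" where
  "heis_act d A c g z = (case g of (h, t) \<Rightarrow> case z of (\<tau>, \<sigma>) \<Rightarrow>
      (\<tau> + of_real h + hform A \<sigma> t / (qdelta d * c) + hform A t t / (2 * qdelta d),
       \<sigma> + c *s t))"

text \<open>U_eps(l) inside the Siegel domain, via z(tau,sigma) = l' - delta tau <l',l> l + sigma.\<close>
definition Ueps :: "int \<Rightarrow> complex^'m^'m \<Rightarrow> complex^'m \<Rightarrow> complex^'m \<Rightarrow> real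
      \<Rightarrow> (complex \<times> (complex^'m)) set" where
  "Ueps d A l l' \<epsilon> = {(\<tau>, \<sigma>). \<sigma> \<in> WC A l l' \<and>
     (let z = l' - (qdelta d * \<tau> * hform A l' l) *s l + \<sigma> in
        Re (hform A z z) > 0 \<and>
        Re (hform A z z) * (cmod (hform A l' l))\<^sup>2 / (cmod (hform A z l))\<^sup>2 > 1 / \<epsilon>)}"

definition cscale :: "complex \<Rightarrow> complex \<times> (complex^'m) \<Rightarrow> complex \<times> (complex^'m)" where
  "cscale a v = (a * fst v, a *s snd v)"

definition holo_on :: "(complex \<times> (complex^'m) \<Rightarrow> complex) \<Rightarrow> (complex \<times> (complex^'m)) set \<Rightarrow> bool" where
  "holo_on f U \<longleftrightarrow> (\<forall>x\<in>U. \<exists>f'. (f has_derivative f') (at x within U) \<and>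
       (\<forall>a v. f' (cscale a v) = a * f' v))"

definition hermitian_on :: "(complex^'m) set \<Rightarrow> (complex^'m \<Rightarrow> complex^'m \<Rightarrow> complex) \<Rightarrow> bool" where
  "hermitian_on S H \<longleftrightarrow>
     (\<forall>x\<in>S. \<forall>y\<in>S. \<forall>z\<in>S. \<forall>a. H (x + y) z = H x z + H y z \<and> H (a *s x) z = a * H x z \<and>
        H y x = cnj (H x y))"

definition sym_bilinear_on :: "(complex^'m) set \<Rightarrow> (complex^'m \<Rightarrow> complex^'m \<Rightarrow> complex) \<Rightarrow> bool" where
  "sym_bilinear_on S G \<longleftrightarrow>
     (\<forall>x\<in>S. \<forall>y\<in>S. \<forall>z\<in>S. \<forall>a. G (x + y) z = G x z + G y z \<and> G (a *s x) z = a * G x z \<and>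
        G y x = G x y)"

definition BIL :: "(complex^'m) set \<Rightarrow> (complex^'m \<Rightarrow> complex^'m \<Rightarrow> real) set" where
  "BIL S = {B. \<exists>(k::nat) (r :: nat \<Rightarrow> real) F.
      (\<forall>i<k. hermitian_on S (F i) \<or> sym_bilinear_on S (F i)) \<and>
      (\<forall>x\<in>S. \<forall>y\<in>S. B x y = (\<Sum>i<k. r i * Im (F i x y)))}"

end

theory Submission
  imports Defs
begin


lemma hform_add_left: "hform A (x+y) z = hform A x z + hform A y z"
  by (simp add: hform_def distrib_right sum.distrib)
lemma hform_diff_left: "hform A (x-y) z = hform A x z - hform A y z"
  by (simp add: hform_def left_diff_distrib sum_subtractf)
lemma hform_scale_left: "hform A (a *s x) z = a * hform A x z"
  by (simp add: hform_def sum_distrib_left mult.assoc)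
lemma hform_sym: assumes "hermitian_k_form d A" shows "hform A y x = cnj (hform A x y)"
proof -
  have cA: "cnj (A$i$j) = A$j$i" for i j
    using assms unfolding hermitian_k_form_def by (metis complex_cnj_cnj)
  have "cnj (hform A x y) = (\<Sum>i\<in>UNIV. \<Sum>j\<in>UNIV. cnj (x$i) * A$j$i * y$j)"
    by (simp add: hform_def cA)
  also have "\<dots> = (\<Sum>j\<in>UNIV. \<Sum>i\<in>UNIV. cnj (x$i) * A$j$i * y$j)" by (rule sum.swap)
  also have "\<dots> = hform A y x" by (simp add: hform_def mult.commute mult.left_commute)
  finally show ?thesis by simp
qed

lemma WC_add: "x \<in> WC A l l' \<Longrightarrow> y \<in> WC A l l' \<Longrightarrow> x + y \<in> WC A l l'"
  by (simp add: WC_def hform_add_left)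
lemma WC_scale: "x \<in> WC A l l' \<Longrightarrow> a *s x \<in> WC A l l'"
  by (simp add: WC_def hform_scale_left)

lemma scaleR_vec: "r *\<^sub>R (v::complex^'m) = complex_of_real r *s v"
  apply (rule iffD2[OF vec_eq_iff], rule allI)
  apply (simp only: vector_scaleR_component vector_smult_component)
  apply (simp add: scaleR_conv_of_real)
  done

definition affh :: "(complex \<times> (complex^'m) \<Rightarrow> complex) \<Rightarrow> bool" where
  "affh f \<longleftrightarrow> (\<exists>L k. (\<forall>x y. L (x+y) = L x + L y) \<and> (\<forall>a x. L (a *s x) = a * L x)
      \<and> f = (\<lambda>z. L (snd z) + k))"

lemma affh_holo: fixes f :: "complex \<times> (complex^'n) \<Rightarrow> complex" assumes "affh f" shows "holo_on f U"
proof -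
  note \<open>affh f\<close>
  then obtain L k where L1: "\<forall>x y. L (x+y) = L x + L y" and L2: "\<forall>a x. L (a *s x) = a * L x"
    and f: "f = (\<lambda>z. L (snd z) + k)" unfolding affh_def by blast
  let ?L = "\<lambda>z::complex \<times> (complex^'n). L (snd z)"
  have "linear ?L"
  proof (rule linearI)
    fix b1 b2 :: "complex \<times> (complex^'n)"
    show "L (snd (b1 + b2)) = L (snd b1) + L (snd b2)" by (simp only: snd_add L1)
  next
    fix r :: real and b :: "complex \<times> (complex^'n)"
    have "L (snd (r *\<^sub>R b)) = L (complex_of_real r *s snd b)"
      by (simp only: snd_scaleR scaleR_vec)
    also have "\<dots> = r *\<^sub>R L (snd b)" by (simp only: L2 scaleR_conv_of_real)
    finally show "L (snd (r *\<^sub>R b)) = r *\<^sub>R L (snd b)" .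
  qed
  hence bl: "bounded_linear ?L" by (rule linear_conv_bounded_linear[THEN iffD1])
  have "(f has_derivative ?L) (at x within U)" for x
    unfolding f by (rule has_derivative_add_const[OF bounded_linear_imp_has_derivative[OF bl]])
  moreover have "?L (cscale a v) = a * ?L v" for a v by (simp add: cscale_def L2)
  ultimately show ?thesis unfolding holo_on_def by blast
qed

lemma affh_const: "affh (\<lambda>z. k)"
  unfolding affh_def by (rule exI[of _ "\<lambda>x. 0"], rule exI[of _ k]) auto

lemma affh_add: assumes "affh f" "affh g" shows "affh (\<lambda>z. f z + g z)"
proof -
  obtain L1 k1 where a: "\<forall>x y. L1 (x+y) = L1 x + L1 y" "\<forall>a x. L1 (a *s x) = a * L1 x"
      "f = (\<lambda>z. L1 (snd z) + k1)" using assms(1) unfolding affh_def by blast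
  obtain L2 k2 where b: "\<forall>x y. L2 (x+y) = L2 x + L2 y" "\<forall>a x. L2 (a *s x) = a * L2 x"
      "g = (\<lambda>z. L2 (snd z) + k2)" using assms(2) unfolding affh_def by blast
  show ?thesis unfolding affh_def
    by (rule exI[of _ "\<lambda>x. L1 x + L2 x"], rule exI[of _ "k1+k2"]) (auto simp: a b algebra_simps)
qed

lemma affh_mult: assumes "affh f" shows "affh (\<lambda>z. c * f z)"
proof -
  obtain L1 k1 where a: "\<forall>x y. L1 (x+y) = L1 x + L1 y" "\<forall>a x. L1 (a *s x) = a * L1 x"
      "f = (\<lambda>z. L1 (snd z) + k1)" using assms(1) unfolding affh_def by blast
  show ?thesis unfolding affh_def
    by (rule exI[of _ "\<lambda>x. c * L1 x"], rule exI[of _ "c*k1"]) (auto simp: a algebra_simps)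
qed

lemma affh_sum: fixes k :: nat shows "(\<And>i. i < k \<Longrightarrow> affh (f i)) \<Longrightarrow> affh (\<lambda>z. \<Sum>i<k. f i z)"
  by (induction k) (auto intro: affh_add affh_const)



lemma herm_facts:
  assumes H: "hermitian_on W H" and x: "x \<in> W" and y: "y \<in> W" and z: "z \<in> W" and xy: "x + y \<in> W"
  shows "H (x + y) z = H x z + H y z" "H (a *s x) z = a * H x z" "H z (x + y) = H z x + H z y"
    "H y x = cnj (H x y)"
proof -
  show 1: "H (x + y) z = H x z + H y z" "H (a *s x) z = a * H x z" "H y x = cnj (H x y)"
    using H x y z xy unfolding hermitian_on_def by blast+
  have "H z (x+y) = cnj (H (x+y) z)" "H z x = cnj (H x z)" "H z y = cnj (H y z)"
    using H x y z xy unfolding hermitian_on_def by blast+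
  then show "H z (x + y) = H z x + H z y" using 1 by simp
qed

lemma sym_facts:
  assumes G: "sym_bilinear_on W G" and x: "x \<in> W" and y: "y \<in> W" and z: "z \<in> W" and xy: "x + y \<in> W"
  shows "G (x + y) z = G x z + G y z" "G z (x + y) = G z x + G z y" "G y x = G x y"
proof -
  show 1: "G (x + y) z = G x z + G y z" "G y x = G x y"
    using G x y z xy unfolding sym_bilinear_on_def by blast+
  have "G z (x+y) = G (x+y) z" "G z x = G x z" "G z y = G y z"
    using G x y z xy unfolding sym_bilinear_on_def by blast+
  then show "G z (x + y) = G z x + G z y" using 1 by simp
qed

lemma herm_cocycle:
  assumes H: "hermitian_on W H"
    and cl_add: "\<And>x y. x \<in> W \<Longrightarrow> y \<in> W \<Longrightarrow> x + y \<in> W"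
    and cl_sc: "\<And>a x. x \<in> W \<Longrightarrow> a *s x \<in> W"
    and t: "t \<in> W" and t': "t' \<in> W" and s: "s \<in> W" and c: "c \<noteq> 0"
  shows "complex_of_real (Im (H t t')) =
      (- 1 / (\<i> * c) * H (s + c *s (- t)) t' + 1 / (2 * \<i>) * H t' t')
    - (- 1 / (\<i> * c) * H s (t + t') + 1 / (2 * \<i>) * H (t + t') (t + t'))
    + (- 1 / (\<i> * c) * H s t + 1 / (2 * \<i>) * H t t)"
proof -
  have mt: "c *s (- t) = (- c) *s t" by (simp add: vec_eq_iff)
  have ct: "(- c) *s t \<in> W" using cl_sc t by blast
  have tt: "t + t' \<in> W" using cl_add t t' by blast
  have tt2: "t + t \<in> W" using cl_add t by blast
  have sct: "s + (- c) *s t \<in> W" using cl_add[OF s ct] .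
  have e1: "H (s + c *s (- t)) t' = H s t' - c * H t t'"
    unfolding mt using herm_facts[OF H s ct t' sct] herm_facts(2)[OF H t t t' tt2, where a="-c"] by simp
  have e2: "H s (t + t') = H s t + H s t'" using herm_facts[OF H t t' s tt] by simp
  have e3: "H (t + t') (t + t') = H t t + H t t' + H t' t + H t' t'"
    using herm_facts[OF H t t' tt tt] herm_facts[OF H t t' t tt] herm_facts[OF H t t' t' tt] by simp
  have e4: "H t' t = cnj (H t t')" using herm_facts[OF H t t' t tt] by simp
  have im: "complex_of_real (Im (H t t')) = (H t t' - cnj (H t t')) / (2 * \<i>)"
    by (simp add: complex_eq_iff)
  define X where "X = H t t'"
  define a where "a = - 1 / (\<i> * c)"
  define b where "b = 1 / (2 * \<i>)"
  have ac: "a * c = \<i>" using c by (simp add: a_def field_simps)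
  have "(a * (H s t' - c * X) + b * H t' t') - (a * (H s t + H s t') + b * (H t t + X + cnj X + H t' t'))
       + (a * H s t + b * H t t) = - (a * c) * X - b * X - b * cnj X"
    by (simp add: algebra_simps)
  also have "\<dots> = (X - cnj X) / (2 * \<i>)" unfolding ac b_def
    by (simp add: field_simps)
  finally have eq: "(a * (H s t' - c * X) + b * H t' t') - (a * (H s t + H s t') + b * (H t t + X + cnj X + H t' t'))
       + (a * H s t + b * H t t) = (X - cnj X) / (2 * \<i>)" .
  show ?thesis unfolding e1 e2 e3 im unfolding e4 unfolding X_def[symmetric] a_def[symmetric] b_def[symmetric]
    using eq by (rule sym)
qed

lemma sym_cocycle:
  assumes G: "sym_bilinear_on W G"
    and cl_add: "\<And>x y. x \<in> W \<Longrightarrow> y \<in> W \<Longrightarrow> x + y \<in> W"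
    and t: "t \<in> W" and t': "t' \<in> W"
  shows "complex_of_real (Im (G t t')) =
      complex_of_real (- Im (G t' t') / 2) - complex_of_real (- Im (G (t + t') (t + t')) / 2)
    + complex_of_real (- Im (G t t) / 2)"
proof -
  have tt: "t + t' \<in> W" using cl_add t t' by blast
  have e3: "G (t + t') (t + t') = G t t + G t t' + G t' t + G t' t'"
    using sym_facts[OF G t t' tt tt] sym_facts[OF G t t' t tt] sym_facts[OF G t t' t' tt] by simp
  have e4: "G t' t = G t t'" using sym_facts[OF G t t' t tt] by simp
  show ?thesis unfolding e3 e4 by (simp add: field_simps)
qed

theorem proposition1:
  fixes d :: int and n :: nat
    and A :: "complex^'m^'m"
    and L :: "(complex^'m) set"
    and l l' :: "complex^'m"
    and N :: real and D\<Gamma> :: "(complex^'m) set"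
    and \<epsilon> :: real
    and B :: "complex^'m \<Rightarrow> complex^'m \<Rightarrow> real"
  assumes disc: "imag_quad_disc d"
    and n: "n \<ge> 1"
    and herm: "hermitian_k_form d A"
    and sig: "herm_signature A 1 (n + 1)"
    and latt: "full_Ok_lattice d L"
    and even: "even_integral d A L"
    and l_prim: "primitive_in d L l" and l_iso: "hform A l l = 0"
    and l'_prim: "primitive_in d (dual_lattice d A L) l'" and l'_iso: "hform A l' l' = 0"
    and ll': "hform A l l' \<noteq> 0"
    and N: "N \<in> \<rat>" "N > 0"
    and DG_sub: "D\<Gamma> \<subseteq> L \<inter> WC A l l'"
    and DG_grp: "0 \<in> D\<Gamma>" "\<And>x y. x \<in> D\<Gamma> \<Longrightarrow> y \<in> D\<Gamma> \<Longrightarrow> x - y \<in> D\<Gamma>"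
    and DG_fin: "finite ((\<lambda>x. (+) x ` D\<Gamma>) ` (L \<inter> WC A l l'))"
    and G_grp: "\<And>g g'. g \<in> {(h, t). h \<in> {N * of_int k | k. True} \<and> t \<in> D\<Gamma>} \<Longrightarrow>
                 g' \<in> {(h, t). h \<in> {N * of_int k | k. True} \<and> t \<in> D\<Gamma>} \<Longrightarrow>
                 heis_mult d A g g' \<in> {(h, t). h \<in> {N * of_int k | k. True} \<and> t \<in> D\<Gamma>}"
    and eps: "\<epsilon> > 0"
    and B: "B \<in> BIL (WC A l l')"
    and m: "CARD('m) = n + 2"
  shows "\<exists>\<phi> :: real \<times> (complex^'m) \<Rightarrow> complex \<times> (complex^'m) \<Rightarrow> complex.
     (\<forall>g \<in> {(h, t). h \<in> {N * of_int k | k. True} \<and> t \<in> D\<Gamma>}.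
        holo_on (\<phi> g) (Ueps d A l l' \<epsilon>)) \<and>
     (\<forall>g \<in> {(h, t). h \<in> {N * of_int k | k. True} \<and> t \<in> D\<Gamma>}.
      \<forall>g' \<in> {(h, t). h \<in> {N * of_int k | k. True} \<and> t \<in> D\<Gamma>}.
      \<forall>z \<in> Ueps d A l l' \<epsilon>.
        complex_of_real (B (snd g) (snd g')) =
          \<phi> g' (heis_act d A (hform A l' l) (heis_inv g) z)
          - \<phi> (heis_mult d A g g') z + \<phi> g z)"
proof -
  define W where "W = WC A l l'"
  define c where "c = hform A l' l"
  have c0: "c \<noteq> 0" using ll' hform_sym[OF herm, of l' l] by (simp add: c_def)
  have cl_add: "\<And>x y. x \<in> W \<Longrightarrow> y \<in> W \<Longrightarrow> x + y \<in> W" unfolding W_def by (rule WC_add)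
  have cl_sc: "\<And>a x. x \<in> W \<Longrightarrow> a *s x \<in> W" unfolding W_def by (rule WC_scale)
  have lls: "hform A l l' \<noteq> 0" by (rule ll')
  define P where "P = (\<lambda>v. v - (hform A v l' / hform A l l') *s l - (hform A v l / c) *s l')"
  have PW: "P v \<in> W" for v
    unfolding P_def W_def WC_def using lls c0
    by (simp add: hform_diff_left hform_scale_left l_iso l'_iso c_def)
  have Pid: "v \<in> W \<Longrightarrow> P v = v" for v
    unfolding P_def W_def WC_def by simp
  have Padd: "P (x + y) = P x + P y" for x y
    unfolding P_def by (simp add: hform_add_left add_divide_distrib vector_add_ldistrib algebra_simps)
  have Psc: "P (a *s x) = a *s P x" for a x
    unfolding P_def by (simp add: hform_scale_left vec_eq_iff algebra_simps)
  obtain k :: nat and r :: "nat \<Rightarrow> real" and F where kF: "\<forall>i<k. hermitian_on W (F i) \<or> sym_bilinear_on W (F i)"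
    and BF: "\<forall>x\<in>W. \<forall>y\<in>W. B x y = (\<Sum>i<k. r i * Im (F i x y))"
    using B unfolding BIL_def W_def mem_Collect_eq by blast
  define \<phi>i where "\<phi>i = (\<lambda>i (g :: real \<times> (complex^'m)) (z :: complex \<times> (complex^'m)).
     if hermitian_on W (F i)
     then - 1 / (\<i> * c) * F i (P (snd z)) (snd g) + 1 / (2 * \<i>) * F i (snd g) (snd g)
     else complex_of_real (- Im (F i (snd g) (snd g)) / 2))"
  define \<phi> where "\<phi> = (\<lambda>g z. \<Sum>i<k. complex_of_real (r i) * \<phi>i i g z)"
  define G where "G = {(h, t). h \<in> {N * of_int k | k. True} \<and> t \<in> D\<Gamma>}"
  have GW: "g \<in> G \<Longrightarrow> snd g \<in> W" for g
    using DG_sub unfolding G_def W_def by auto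
  have aff: "affh (\<phi>i i g)" if "snd g \<in> W" for i g
  proof (cases "hermitian_on W (F i)")
    case True
    let ?L = "\<lambda>x. - 1 / (\<i> * c) * F i (P x) (snd g)"
    have L1: "?L (x + y) = ?L x + ?L y" for x y
      using herm_facts(1)[OF True PW[of x] PW[of y] that cl_add[OF PW PW]]
      by (simp add: Padd algebra_simps)
    have L2: "?L (a *s x) = a * ?L x" for a x
      using herm_facts(2)[OF True PW[of x] PW[of x] that cl_add[OF PW PW], of a]
      by (simp add: Psc)
    have "\<phi>i i g = (\<lambda>z. ?L (snd z) + 1 / (2 * \<i>) * F i (snd g) (snd g))"
      using True by (simp add: \<phi>i_def fun_eq_iff)
    then show ?thesis unfolding affh_def
      by (intro exI[of _ ?L] exI[of _ "1 / (2 * \<i>) * F i (snd g) (snd g)"] conjI allI L1 L2)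
  next
    case False
    then show ?thesis using affh_const[of "complex_of_real (- Im (F i (snd g) (snd g)) / 2)"]
      by (simp add: \<phi>i_def)
  qed
  have per: "complex_of_real (Im (F i t t')) =
      \<phi>i i g' (\<tau>', \<sigma> + c *s (- t)) - \<phi>i i g'' (\<tau>, \<sigma>) + \<phi>i i g (\<tau>, \<sigma>)"
    if "i < k" "snd g = t" "snd g' = t'" "snd g'' = t + t'" "t \<in> W" "t' \<in> W" "\<sigma> \<in> W"
    for i g g' g'' t t' \<tau> \<tau>' \<sigma>
  proof (cases "hermitian_on W (F i)")
    case True
    have mt: "c *s (- t) = (- c) *s t" by (simp add: vec_eq_iff)
    have s2: "\<sigma> + c *s (- t) \<in> W" unfolding mt by (rule cl_add[OF that(7) cl_sc[OF that(5)]])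
    show ?thesis
      using herm_cocycle[OF True cl_add cl_sc that(5,6,7) c0] True that Pid[OF s2] Pid[OF that(7)]
      by (simp add: \<phi>i_def)
  next
    case False
    then have "sym_bilinear_on W (F i)" using kF that(1) by blast
    then show ?thesis using sym_cocycle[OF _ cl_add that(5,6)] False that
      by (simp add: \<phi>i_def)
  qed
  show ?thesis
  proof (intro exI[of _ \<phi>] conjI ballI)
    fix g assume "g \<in> {(h, t). h \<in> {N * of_int k | k. True} \<and> t \<in> D\<Gamma>}"
    then have "snd g \<in> W" using GW unfolding G_def by blast
    then show "holo_on (\<phi> g) (Ueps d A l l' \<epsilon>)"
      unfolding \<phi>_def by (intro affh_holo affh_sum affh_mult aff)
  next
    fix g g' z
    assume g: "g \<in> {(h, t). h \<in> {N * of_int k | k. True} \<and> t \<in> D\<Gamma>}"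
      and g': "g' \<in> {(h, t). h \<in> {N * of_int k | k. True} \<and> t \<in> D\<Gamma>}"
      and z: "z \<in> Ueps d A l l' \<epsilon>"
    obtain h t where gd: "g = (h, t)" by (cases g)
    obtain h' t' where gd': "g' = (h', t')" by (cases g')
    obtain \<tau> \<sigma> where zd: "z = (\<tau>, \<sigma>)" by (cases z)
    have t: "t \<in> W" using GW[of g] g gd unfolding G_def by auto
    have t': "t' \<in> W" using GW[of g'] g' gd' unfolding G_def by auto
    have s: "\<sigma> \<in> W" using z zd unfolding Ueps_def W_def by auto
    have act: "heis_act d A (hform A l' l) (heis_inv g) z =
        (\<tau> + of_real (- h) + hform A \<sigma> (- t) / (qdelta d * c) + hform A (- t) (- t) / (2 * qdelta d),
         \<sigma> + c *s (- t))"
      by (simp add: heis_act_def heis_inv_def gd zd c_def)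
    have mul: "snd (heis_mult d A g g') = t + t'" by (simp add: heis_mult_def gd gd')
    have "complex_of_real (B (snd g) (snd g')) = (\<Sum>i<k. complex_of_real (r i) * complex_of_real (Im (F i t t')))"
      using BF t t' gd gd' by simp
    also have "\<dots> = (\<Sum>i<k. complex_of_real (r i) *
        (\<phi>i i g' (heis_act d A (hform A l' l) (heis_inv g) z) - \<phi>i i (heis_mult d A g g') z + \<phi>i i g z))"
      unfolding act unfolding zd
      by (intro sum.cong refl arg_cong2[where f="(*)"] per) (use t t' s mul gd gd' in auto)
    also have "\<dots> = \<phi> g' (heis_act d A (hform A l' l) (heis_inv g) z) - \<phi> (heis_mult d A g g') z + \<phi> g z"
      unfolding \<phi>_def by (simp add: sum.distrib sum_subtractf algebra_simps)
    finally show "complex_of_real (B (snd g) (snd g')) =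
        \<phi> g' (heis_act d A (hform A l' l) (heis_inv g) z) - \<phi> (heis_mult d A g g') z + \<phi> g z" .
  qed
qed

end
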